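(* Let $G=(V,E,T,c)$ and $H=(V_H,E_H,T,c_H)$ be $k$-terminal networks with the same terminal set $T$, and let $q\ge1$. Suppose $\mathcal{T}_e(G)=\mathcal{T}_e(H)$ and $$\mathrm{mincut}_G(S)\le \mathrm{mincut}_H(S)\le q\cdot \mathrm{mincut}_G(S)\qquad\text{for all } S\in\mathcal{T}_e(G).$$ Then $\mathrm{mincut}_G(S)\le \mathrm{mincut}_H(S)\le q\cdot\mathrm{mincut}_G(S)$ for every $S\subset T$ with $S\ne\emptyset,T$; that is, $H$ is a cut sparsifier of $G$ of quality $q$.
   Context: A $k$-terminal network $G=(V,E,T,c)$ is a finite connected undirected graph $(V,E)$ with edge weights (capacities) $c:E\to\mathbb{R}_{>0}$ and a set $T\subseteq V$ of $|T|=k$ terminals. For $F\subseteq E$ let $c(F)=\sum_{e\in F}c(e)$; for $W\subseteq V$ let $\delta(W)$ be the set of edges with exactly one endpoint in $W$. For $S\subset T$ with $S\neq\emptyset,T$, write $\bar S=T\setminus S$; a cut $(W,V\setminus W)$ is $S$-separating if $W\cap T\in\{S,\bar S\}$, and $\mathrm{mincut}_G(S)$ is the minimum of $c(\delta(W))$ over all $S$-separating cuts. It is assumed (e.g. by a generic perturbation of the weights) that the minimizing cutset is unique; it is denoted $E_S$ (so $E_S=E_{\bar S}$). For $F\subseteq E$, $CC(F)$ denotes the set of vertex sets of connected components of $(V,E\setminus F)$. The cutset $E_S$ is called elementary if $|CC(E_S)|=2$, and $\mathcal{T}_e(G)=\{S\subset T:\ S\neq\emptyset,T,\ |CC(E_S)|=2\}$.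 The same notions are used for $H$. *)

theory Defs
  imports Complex_Main
begin

definition delta :: "'e set \<Rightarrow> ('e \<Rightarrow> 'v set) \<Rightarrow> 'v set \<Rightarrow> 'e set" where
  "delta E ends W = {e \<in> E. card (ends e \<inter> W) = 1}"

definition adj_rel :: "'e set \<Rightarrow> ('e \<Rightarrow> 'v set) \<Rightarrow> 'e set \<Rightarrow> ('v \<times> 'v) set" where
  "adj_rel E ends F = {(u, v). \<exists>e \<in> E - F. ends e = {u, v}}"

definition CC :: "'v set \<Rightarrow> 'e set \<Rightarrow> ('e \<Rightarrow> 'v set) \<Rightarrow> 'e set \<Rightarrow> 'v set set" where
  "CC V E ends F = {{v \<in> V. (u, v) \<in> (adj_rel E ends F)\<^sup>*} | u. u \<in> V}"

definition terminal_network ::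
  "'v set \<Rightarrow> 'e set \<Rightarrow> ('e \<Rightarrow> 'v set) \<Rightarrow> 'v set \<Rightarrow> ('e \<Rightarrow> real) \<Rightarrow> bool" where
  "terminal_network V E ends T c \<longleftrightarrow>
     finite V \<and> finite E \<and>
     (\<forall>e \<in> E. ends e \<subseteq> V \<and> card (ends e) = 2) \<and>
     (\<forall>u \<in> V. \<forall>v \<in> V. (u, v) \<in> (adj_rel E ends {})\<^sup>*) \<and>
     T \<subseteq> V \<and> (\<forall>e \<in> E. c e > 0)"

definition proper_terminal_subset :: "'v set \<Rightarrow> 'v set \<Rightarrow> bool" where
  "proper_terminal_subset T S \<longleftrightarrow> S \<subseteq> T \<and> S \<noteq> {} \<and> S \<noteq> T"

definition separating :: "'v set \<Rightarrow> 'v set \<Rightarrow> 'v set \<Rightarrow> 'v set \<Rightarrow> bool" where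
  "separating V T S W \<longleftrightarrow> W \<subseteq> V \<and> (W \<inter> T = S \<or> W \<inter> T = T - S)"

definition mincut ::
  "'v set \<Rightarrow> 'e set \<Rightarrow> ('e \<Rightarrow> 'v set) \<Rightarrow> 'v set \<Rightarrow> ('e \<Rightarrow> real) \<Rightarrow> 'v set \<Rightarrow> real" where
  "mincut V E ends T c S =
     Min {sum c (delta E ends W) | W. separating V T S W}"

text \<open>Standing assumption: for each S the minimizing cutset is unique.\<close>
definition unique_mincuts ::
  "'v set \<Rightarrow> 'e set \<Rightarrow> ('e \<Rightarrow> 'v set) \<Rightarrow> 'v set \<Rightarrow> ('e \<Rightarrow> real) \<Rightarrow> bool" where
  "unique_mincuts V E ends T c \<longleftrightarrow>
     (\<forall>S. proper_terminal_subset T S \<longrightarrow>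
        (\<exists>!F. (\<exists>W. separating V T S W \<and> F = delta E ends W) \<and>
              sum c F = mincut V E ends T c S))"

definition min_cutset ::
  "'v set \<Rightarrow> 'e set \<Rightarrow> ('e \<Rightarrow> 'v set) \<Rightarrow> 'v set \<Rightarrow> ('e \<Rightarrow> real) \<Rightarrow> 'v set \<Rightarrow> 'e set" where
  "min_cutset V E ends T c S =
     (THE F. (\<exists>W. separating V T S W \<and> F = delta E ends W) \<and>
             sum c F = mincut V E ends T c S)"

definition elementary_sets ::
  "'v set \<Rightarrow> 'e set \<Rightarrow> ('e \<Rightarrow> 'v set) \<Rightarrow> 'v set \<Rightarrow> ('e \<Rightarrow> real) \<Rightarrow> 'v set set" where
  "elementary_sets V E ends T c =
     {S. proper_terminal_subset T S \<and> card (CC V E ends (min_cutset V E ends T c S)) = 2}"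

end

theory Submission
  imports Defs
begin

lemma delta_iff:
  assumes "e \<in> E" "ends e = {a,b}" "a \<noteq> b"
  shows "e \<in> delta E ends X \<longleftrightarrow> (a \<in> X \<longleftrightarrow> b \<notin> X)"
  using assms by (cases "a \<in> X"; cases "b \<in> X") (auto simp: delta_def Int_insert_left)

lemma crossing:
  assumes "(u,v) \<in> R\<^sup>*" "u \<in> K" "v \<notin> K"
  shows "\<exists>x y. (x,y) \<in> R \<and> x \<in> K \<and> y \<notin> K"
  using assms by (induction rule: rtrancl_induct) blast+

locale net =
  fixes V :: "'v set" and E :: "'e set" and ends :: "'e \<Rightarrow> 'v set" and T :: "'v set" and c :: "'e \<Rightarrow> real"
  assumes tn: "terminal_network V E ends T c"
begin

lemma finV: "finite V" and finE: "finite E" and TV: "T \<subseteq> V"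
  and cpos: "e \<in> E \<Longrightarrow> c e > 0"
  and conn: "u \<in> V \<Longrightarrow> v \<in> V \<Longrightarrow> (u,v) \<in> (adj_rel E ends {})\<^sup>*"
  using tn by (auto simp: terminal_network_def)

lemma ends2: "e \<in> E \<Longrightarrow> \<exists>a b. a \<noteq> b \<and> ends e = {a,b} \<and> a \<in> V \<and> b \<in> V"
proof -
  assume e: "e \<in> E"
  have "ends e \<subseteq> V" "card (ends e) = 2" using tn e by (auto simp: terminal_network_def)
  then show ?thesis by (auto simp: card_2_iff)
qed

lemma delta_sub: "delta E ends X \<subseteq> E" by (auto simp: delta_def)

lemma cnn: "e \<in> delta E ends X \<Longrightarrow> 0 \<le> c e"
  using delta_sub cpos by (meson less_imp_le subsetD)

lemma fin_delta: "finite (delta E ends X)" using finE delta_sub finite_subset by blast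

lemma delta_Diff: "delta E ends (V - X) = delta E ends X"
proof (rule set_eqI)
  fix e show "e \<in> delta E ends (V - X) \<longleftrightarrow> e \<in> delta E ends X"
  proof (cases "e \<in> E")
    case True
    then obtain a b where ab: "a \<noteq> b" "ends e = {a,b}" "a \<in> V" "b \<in> V" using ends2 by blast
    show ?thesis unfolding delta_iff[of e E ends a b "V - X", OF True ab(2,1)] delta_iff[of e E ends a b X, OF True ab(2,1)]
      using ab(3,4) by blast
  next
    case False then show ?thesis using delta_sub by blast
  qed
qed

lemma delta_nonempty:
  assumes "a \<in> A" "a \<in> V" "b \<in> V" "b \<notin> A"
  shows "delta E ends A \<noteq> {}"
proof -
  obtain x y where xy: "(x,y) \<in> adj_rel E ends {}" "x \<in> A" "y \<notin> A"
    using crossing[OF conn[OF assms(2,3)] assms(1,4)] by blast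
  then obtain e where e: "e \<in> E" "ends e = {x,y}" by (auto simp: adj_rel_def)
  have "x \<noteq> y" using xy by auto
  then have "e \<in> delta E ends A" unfolding delta_iff[of e E ends x y A, OF e \<open>x \<noteq> y\<close>] using xy by blast
  then show ?thesis by auto
qed

lemma sum_delta_pos: "delta E ends A \<noteq> {} \<Longrightarrow> sum c (delta E ends A) > 0"
  using fin_delta delta_sub cpos by (intro sum_pos) auto

lemma adj_step:
  assumes "(y,z) \<in> adj_rel E ends (delta E ends X)"
  shows "y \<in> V \<and> z \<in> V \<and> (y \<in> X \<longleftrightarrow> z \<in> X)"
proof -
  obtain e where e: "e \<in> E" "e \<notin> delta E ends X" "ends e = {y,z}"
    using assms by (auto simp: adj_rel_def)
  obtain a b where ab: "a \<noteq> b" "ends e = {a,b}" "a \<in> V" "b \<in> V" using ends2 e(1) by blast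
  have yz: "y \<in> V" "z \<in> V" "y \<noteq> z" using ab e(3) by (auto simp: doubleton_eq_iff)
  have "e \<in> delta E ends X \<longleftrightarrow> (y \<in> X \<longleftrightarrow> z \<notin> X)" by (rule delta_iff[of e E ends y z X, OF e(1) e(3) yz(3)])
  then show ?thesis using e(2) yz by blast
qed

lemma side:
  assumes "(x,y) \<in> (adj_rel E ends (delta E ends X))\<^sup>*" "x \<in> V"
  shows "y \<in> V \<and> (x \<in> X \<longleftrightarrow> y \<in> X)"
  using assms
proof (induction rule: rtrancl_induct)
  case (step y z) then show ?case using adj_step[OF step(2)] by blast
qed auto

lemma sym_adj: "sym (adj_rel E ends F)"
  unfolding adj_rel_def sym_def by (auto simp: insert_commute)

lemma reach_sym: "(x,y) \<in> (adj_rel E ends F)\<^sup>* \<Longrightarrow> (y,x) \<in> (adj_rel E ends F)\<^sup>*"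
  using sym_rtrancl[OF sym_adj] by (auto dest: symD)

lemma mincut_fin: "finite {sum c (delta E ends W) | W. separating V T S W}"
proof -
  have "{sum c (delta E ends W) | W. separating V T S W} = (\<lambda>W. sum c (delta E ends W)) ` {W. separating V T S W}"
    by auto
  moreover have "{W. separating V T S W} \<subseteq> Pow V" by (auto simp: separating_def)
  ultimately show ?thesis using finV by (metis finite_Pow_iff finite_imageI finite_subset)
qed

lemma mincut_le: "separating V T S W \<Longrightarrow> mincut V E ends T c S \<le> sum c (delta E ends W)"
  unfolding mincut_def by (rule Min_le[OF mincut_fin]) auto

lemma mincut_ex:
  assumes "S \<subseteq> T"
  shows "\<exists>W. separating V T S W \<and> sum c (delta E ends W) = mincut V E ends T c S"
proof -
  have "separating V T S S" using assms TV by (auto simp: separating_def)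
  then have "{sum c (delta E ends W) | W. separating V T S W} \<noteq> {}" by auto
  from Min_in[OF mincut_fin this] show ?thesis unfolding mincut_def by auto
qed

lemma subadd:
  assumes "S1 \<subseteq> T" "S2 \<subseteq> T" "S1 \<inter> S2 = {}" "S1 \<union> S2 = S \<or> S1 \<union> S2 = T - S" "S \<subseteq> T"
  shows "mincut V E ends T c S \<le> mincut V E ends T c S1 + mincut V E ends T c S2"
proof -
  obtain W1 where W1: "separating V T S1 W1" "sum c (delta E ends W1) = mincut V E ends T c S1"
    using mincut_ex[OF assms(1)] by blast
  obtain W2 where W2: "separating V T S2 W2" "sum c (delta E ends W2) = mincut V E ends T c S2"
    using mincut_ex[OF assms(2)] by blast
  define W where "W = (W1 - W2) \<union> (W2 - W1)"
  have A1: "W1 \<inter> T = S1 \<or> W1 \<inter> T = T - S1" and V1: "W1 \<subseteq> V" using W1(1) by (auto simp: separating_def)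
  have A2: "W2 \<inter> T = S2 \<or> W2 \<inter> T = T - S2" and V2: "W2 \<subseteq> V" using W2(1) by (auto simp: separating_def)
  have WT: "W \<inter> T = (W1 \<inter> T - W2 \<inter> T) \<union> (W2 \<inter> T - W1 \<inter> T)" by (auto simp: W_def)
  have U: "W \<inter> T = S1 \<union> S2 \<or> W \<inter> T = T - (S1 \<union> S2)"
    using A1 A2 assms(1-3) unfolding WT by blast
  have "W \<inter> T = S \<or> W \<inter> T = T - S" using U assms(4,5) by blast
  then have sepW: "separating V T S W"
    using V1 V2 unfolding separating_def W_def by blast
  have sub: "delta E ends W \<subseteq> delta E ends W1 \<union> delta E ends W2"
  proof
    fix e assume e: "e \<in> delta E ends W"
    then have eE: "e \<in> E" using delta_sub by auto
    then obtain a b where ab: "a \<noteq> b" "ends e = {a,b}" using ends2 by blast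
    show "e \<in> delta E ends W1 \<union> delta E ends W2"
      using e delta_iff[of e E ends a b W, OF eE ab(2,1)] delta_iff[of e E ends a b W1, OF eE ab(2,1)]
        delta_iff[of e E ends a b W2, OF eE ab(2,1)] unfolding W_def by auto
  qed
  have "mincut V E ends T c S \<le> sum c (delta E ends W)" by (rule mincut_le[OF sepW])
  also have "\<dots> \<le> sum c (delta E ends W1 \<union> delta E ends W2)"
    using sub fin_delta cnn by (intro sum_mono2) auto
  also have "\<dots> \<le> sum c (delta E ends W1) + sum c (delta E ends W2)"
  proof -
    have "sum c (delta E ends W1 \<inter> delta E ends W2) \<ge> 0"
      using cnn by (intro sum_nonneg) auto
    then show ?thesis by (simp add: sum_Un fin_delta)
  qed
  finally show ?thesis using W1 W2 by simp
qed

lemma core: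
  assumes sep: "separating V T S X" and ST: "S \<subseteq> T"
    and opt: "sum c (delta E ends X) = mincut V E ends T c S"
    and u: "u \<in> X" and t: "t \<in> X" "t \<in> T" and t': "t' \<in> T" "t' \<notin> X"
    and nr: "(u,t) \<notin> (adj_rel E ends (delta E ends X))\<^sup>*"
    and Cdef: "C = {v \<in> V. (u,v) \<in> (adj_rel E ends (delta E ends X))\<^sup>*}"
  shows "C \<inter> T \<noteq> {}" "C \<subseteq> X" "t \<notin> C"
    "delta E ends C \<subseteq> delta E ends X"
    "delta E ends (X - C) = delta E ends X - delta E ends C"
    "delta E ends C \<noteq> {}" "delta E ends (X - C) \<noteq> {}"
proof -
  have XV: "X \<subseteq> V" using sep by (auto simp: separating_def)
  have uV: "u \<in> V" using u XV by auto
  show CX: "C \<subseteq> X" using side[of u _ X] uV u unfolding Cdef by blast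
  show tC: "t \<notin> C" using nr Cdef by auto
  show dC: "delta E ends C \<subseteq> delta E ends X"
  proof
    fix e assume e: "e \<in> delta E ends C"
    then have eE: "e \<in> E" using delta_sub by auto
    then obtain a b where ab: "a \<noteq> b" "ends e = {a,b}" "a \<in> V" "b \<in> V" using ends2 by blast
    show "e \<in> delta E ends X"
    proof (rule ccontr)
      assume ne: "e \<notin> delta E ends X"
      have ba: "ends e = {b,a}" using ab(2) by (simp add: insert_commute)
      have r1: "(a,b) \<in> adj_rel E ends (delta E ends X)"
        unfolding adj_rel_def using eE ne ab(2) by blast
      have r2: "(b,a) \<in> adj_rel E ends (delta E ends X)"
        unfolding adj_rel_def using eE ne ba by blast
      have i1: "a \<in> C \<Longrightarrow> b \<in> C" using r1 ab(4) unfolding Cdef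
        by (auto intro: rtrancl_into_rtrancl)
      have i2: "b \<in> C \<Longrightarrow> a \<in> C" using r2 ab(3) unfolding Cdef
        by (auto intro: rtrancl_into_rtrancl)
      have "e \<in> delta E ends C \<longleftrightarrow> (a \<in> C \<longleftrightarrow> b \<notin> C)"
        by (rule delta_iff[of e E ends a b C, OF eE ab(2,1)])
      then show False using e i1 i2 by blast
    qed
  qed
  show dXC: "delta E ends (X - C) = delta E ends X - delta E ends C"
  proof (rule set_eqI)
    fix e show "e \<in> delta E ends (X - C) \<longleftrightarrow> e \<in> delta E ends X - delta E ends C"
    proof (cases "e \<in> E")
      case True
      then obtain a b where ab: "a \<noteq> b" "ends e = {a,b}" using ends2 by blast
      have h: "(a \<in> C \<longleftrightarrow> b \<notin> C) \<longrightarrow> (a \<in> X \<longleftrightarrow> b \<notin> X)"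
        using dC delta_iff[of e E ends a b C, OF True ab(2,1)] delta_iff[of e E ends a b X, OF True ab(2,1)] by blast
      show ?thesis using h CX delta_iff[of e E ends a b "X - C", OF True ab(2,1)] delta_iff[of e E ends a b X, OF True ab(2,1)]
        delta_iff[of e E ends a b C, OF True ab(2,1)] by auto
    qed (use delta_sub in auto)
  qed
  have uC: "u \<in> C" using uV unfolding Cdef by auto
  have t'V: "t' \<in> V" using t' TV by auto
  show dCne: "delta E ends C \<noteq> {}"
    using delta_nonempty[OF uC uV t'V] CX t' by auto
  show "delta E ends (X - C) \<noteq> {}"
    using delta_nonempty[of t "X - C" t'] t tC t'V TV t' by auto
  show "C \<inter> T \<noteq> {}"
  proof
    assume CT: "C \<inter> T = {}"
    have "separating V T S (X - C)" using sep CT unfolding separating_def by blast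
    then have "mincut V E ends T c S \<le> sum c (delta E ends (X - C))" by (rule mincut_le)
    also have "\<dots> = sum c (delta E ends X) - sum c (delta E ends C)"
      using sum.subset_diff[OF dC fin_delta, of c] dXC by simp
    also have "\<dots> < sum c (delta E ends X)" using sum_delta_pos[OF dCne] by simp
    finally show False using opt by simp
  qed
qed

end

locale unet = net +
  assumes um: "unique_mincuts V E ends T c"
begin

lemma mcs:
  assumes "proper_terminal_subset T S"
  shows "\<exists>W. separating V T S W \<and> min_cutset V E ends T c S = delta E ends W
           \<and> sum c (delta E ends W) = mincut V E ends T c S"
proof -
  let ?P = "\<lambda>F. (\<exists>W. separating V T S W \<and> F = delta E ends W) \<and> sum c F = mincut V E ends T c S"
  have "\<exists>!F. ?P F" using um assms unfolding unique_mincuts_def by blast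
  from theI'[OF this] show ?thesis unfolding min_cutset_def by auto
qed

lemma mcs_eq:
  assumes "proper_terminal_subset T S" "separating V T S W" "sum c (delta E ends W) = mincut V E ends T c S"
  shows "min_cutset V E ends T c S = delta E ends W"
proof -
  let ?P = "\<lambda>F. (\<exists>W. separating V T S W \<and> F = delta E ends W) \<and> sum c F = mincut V E ends T c S"
  have "\<exists>!F. ?P F" using um assms unfolding unique_mincuts_def by blast
  from the1_equality[OF this, of "delta E ends W"] assms show ?thesis
    unfolding min_cutset_def by auto
qed

lemma split:
  assumes pS: "proper_terminal_subset T S" and ne: "S \<notin> elementary_sets V E ends T c"
  shows "\<exists>SA SB. proper_terminal_subset T SA \<and> proper_terminal_subset T SB \<and>
    SA \<inter> SB = {} \<and> (SA \<union> SB = S \<or> SA \<union> SB = T - S) \<and>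
    mincut V E ends T c S = mincut V E ends T c SA + mincut V E ends T c SB \<and>
    card (min_cutset V E ends T c SA) < card (min_cutset V E ends T c S) \<and>
    card (min_cutset V E ends T c SB) < card (min_cutset V E ends T c S)"
proof -
  have ST: "S \<subseteq> T" using pS by (auto simp: proper_terminal_subset_def)
  obtain W0 where W0: "separating V T S W0" "min_cutset V E ends T c S = delta E ends W0"
    "sum c (delta E ends W0) = mincut V E ends T c S" using mcs[OF pS] by blast
  define F where "F = delta E ends W0"
  have c2: "card (CC V E ends F) \<noteq> 2" using ne pS W0(2) F_def by (auto simp: elementary_sets_def)
  define R where "R = adj_rel E ends F"
  define cl where "cl u = {v \<in> V. (u,v) \<in> R\<^sup>*}" for u
  have CCeq: "CC V E ends F = cl ` V" unfolding CC_def cl_def R_def by auto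
  have finCC: "finite (CC V E ends F)" using CCeq finV by simp
  have cl_eq: "cl v = cl u" if "v \<in> cl u" for u v
  proof -
    have uv: "(u,v) \<in> R\<^sup>*" using that cl_def by auto
    have vu: "(v,u) \<in> R\<^sup>*" using reach_sym uv R_def by blast
    show ?thesis unfolding cl_def using uv vu by (auto intro: rtrancl_trans)
  qed
  obtain t1 where t1: "t1 \<in> S" using pS by (auto simp: proper_terminal_subset_def)
  obtain t2 where t2: "t2 \<in> T" "t2 \<notin> S" using pS by (auto simp: proper_terminal_subset_def)
  have t1T: "t1 \<in> T" using t1 ST by auto
  have sides: "t1 \<in> W0 \<longleftrightarrow> t2 \<notin> W0" using W0(1) t1 t2 t1T by (auto simp: separating_def)
  have t12V: "t1 \<in> V" "t2 \<in> V" using t1T t2 TV by auto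
  have t2cl: "t2 \<in> cl t2" using t12V unfolding cl_def by auto
  have "t2 \<notin> cl t1" using side[of t1 t2 W0] sides t12V unfolding cl_def R_def F_def by auto
  then have d12: "cl t1 \<noteq> cl t2" using t2cl by auto
  obtain u where u: "u \<in> V" "cl u \<noteq> cl t1" "cl u \<noteq> cl t2"
  proof (rule ccontr)
    assume "\<not> thesis"
    then have "\<forall>u\<in>V. cl u = cl t1 \<or> cl u = cl t2" using that by blast
    then have "cl ` V = {cl t1, cl t2}" using t12V by auto
    then show False using c2 CCeq d12 by auto
  qed
  define X where "X = (if u \<in> W0 then W0 else V - W0)"
  define t where "t = (if (u \<in> W0 \<longleftrightarrow> t1 \<in> W0) then t1 else t2)"
  define t' where "t' = (if (u \<in> W0 \<longleftrightarrow> t1 \<in> W0) then t2 else t1)"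
  have W0V: "W0 \<subseteq> V" using W0(1) by (auto simp: separating_def)
  have sepX: "separating V T S X"
    using W0(1) TV ST unfolding X_def separating_def by auto
  have dX: "delta E ends X = F" unfolding X_def F_def using delta_Diff by auto
  have uX: "u \<in> X" using u unfolding X_def by auto
  have tX: "t \<in> X" "t \<in> T" using sides t12V t1T t2 u(1) unfolding X_def t_def by auto
  have t'X: "t' \<in> T" "t' \<notin> X" using sides t12V t1T t2 u(1) unfolding X_def t'_def by auto
  have clt: "cl u \<noteq> cl t" using u unfolding t_def by auto
  have nr: "(u,t) \<notin> (adj_rel E ends (delta E ends X))\<^sup>*"
  proof
    assume "(u,t) \<in> (adj_rel E ends (delta E ends X))\<^sup>*"
    then have "t \<in> cl u" using tX TV unfolding cl_def R_def dX by auto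
    then show False using cl_eq clt by metis
  qed
  define C where "C = {v \<in> V. (u,v) \<in> (adj_rel E ends (delta E ends X))\<^sup>*}"
  note co = core[OF sepX ST _ uX tX t'X nr C_def]
  have opt: "sum c (delta E ends X) = mincut V E ends T c S" using dX W0(3) F_def by simp
  note co = co[OF opt]
  define SA where "SA = C \<inter> T"
  define SB where "SB = (X - C) \<inter> T"
  have XV: "X \<subseteq> V" using sepX by (auto simp: separating_def)
  have pA: "proper_terminal_subset T SA" using co(1,3) tX unfolding SA_def proper_terminal_subset_def by auto
  have pB: "proper_terminal_subset T SB" using co(3) tX t'X unfolding SB_def proper_terminal_subset_def by auto
  have disj: "SA \<inter> SB = {}" unfolding SA_def SB_def by auto
  have un: "SA \<union> SB = S \<or> SA \<union> SB = T - S" using sepX co(2) unfolding SA_def SB_def separating_def by auto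
  have sA: "separating V T SA C" using co(2) XV unfolding SA_def separating_def by auto
  have sB: "separating V T SB (X - C)" using XV unfolding SB_def separating_def by auto
  have lA: "mincut V E ends T c SA \<le> sum c (delta E ends C)" by (rule mincut_le[OF sA])
  have lB: "mincut V E ends T c SB \<le> sum c (delta E ends (X - C))" by (rule mincut_le[OF sB])
  have sumeq: "sum c (delta E ends X) = sum c (delta E ends C) + sum c (delta E ends (X - C))"
    using sum.subset_diff[OF co(4) fin_delta, of c] co(5) by simp
  have sa: "mincut V E ends T c S \<le> mincut V E ends T c SA + mincut V E ends T c SB"
    using subadd[of SA SB S] pA pB disj un ST by (auto simp: proper_terminal_subset_def)
  have eA: "mincut V E ends T c SA = sum c (delta E ends C)" using lA lB sa sumeq opt by linarith
  have eB: "mincut V E ends T c SB = sum c (delta E ends (X - C))" using lA lB sa sumeq opt by linarith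
  have mA: "min_cutset V E ends T c SA = delta E ends C" using mcs_eq[OF pA sA] eA by simp
  have mB: "min_cutset V E ends T c SB = delta E ends (X - C)" using mcs_eq[OF pB sB] eB by simp
  have mS: "min_cutset V E ends T c S = delta E ends X" using W0(2) dX F_def by simp
  have cA: "card (delta E ends C) < card (delta E ends X)"
    using co(4,5,7) by (intro psubset_card_mono fin_delta) blast
  have cB: "card (delta E ends (X - C)) < card (delta E ends X)"
    using co(4,5,6) by (intro psubset_card_mono fin_delta) blast
  show ?thesis
    apply (rule exI[of _ SA], rule exI[of _ SB])
    using pA pB disj un eA eB sumeq opt mA mB mS cA cB by simp
qed

end

lemma combine:
  fixes V :: "'v set" and E :: "'e set" and ends :: "'e \<Rightarrow> 'v set" and c :: "'e \<Rightarrow> real"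
    and V2 :: "'v set" and E2 :: "'f set" and ends2 :: "'f \<Rightarrow> 'v set" and c2 :: "'f \<Rightarrow> real"
  assumes U: "unet V E ends T c" and N: "net V2 E2 ends2 T c2"
    and el: "\<And>S. S \<in> elementary_sets V E ends T c \<Longrightarrow>
       mincut V2 E2 ends2 T c2 S \<le> a * mincut V E ends T c S"
  shows "proper_terminal_subset T S \<Longrightarrow> mincut V2 E2 ends2 T c2 S \<le> a * mincut V E ends T c S"
proof (induction "card (min_cutset V E ends T c S)" arbitrary: S rule: less_induct)
  case less
  show ?case
  proof (cases "S \<in> elementary_sets V E ends T c")
    case True then show ?thesis using el by blast
  next
    case False
    obtain SA SB where sp: "proper_terminal_subset T SA" "proper_terminal_subset T SB"
      "SA \<inter> SB = {}" "SA \<union> SB = S \<or> SA \<union> SB = T - S"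
      "mincut V E ends T c S = mincut V E ends T c SA + mincut V E ends T c SB"
      "card (min_cutset V E ends T c SA) < card (min_cutset V E ends T c S)"
      "card (min_cutset V E ends T c SB) < card (min_cutset V E ends T c S)"
      using unet.split[OF U less.prems False] by blast
    have "mincut V2 E2 ends2 T c2 S \<le> mincut V2 E2 ends2 T c2 SA + mincut V2 E2 ends2 T c2 SB"
      using net.subadd[OF N, of SA SB S] sp less.prems by (auto simp: proper_terminal_subset_def)
    also have "\<dots> \<le> a * mincut V E ends T c SA + a * mincut V E ends T c SB"
      using less.hyps[OF sp(6) sp(1)] less.hyps[OF sp(7) sp(2)] by linarith
    also have "\<dots> = a * mincut V E ends T c S" using sp(5) by (simp add: algebra_simps)
    finally show ?thesis .
  qed
qed

theorem theorem2p6: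
  fixes V :: "'v set" and E :: "'e set" and ends :: "'e \<Rightarrow> 'v set" and c :: "'e \<Rightarrow> real"
    and VH :: "'v set" and EH :: "'f set" and endsH :: "'f \<Rightarrow> 'v set" and cH :: "'f \<Rightarrow> real"
    and T :: "'v set" and q :: real
  assumes G: "terminal_network V E ends T c" and uG: "unique_mincuts V E ends T c"
    and H: "terminal_network VH EH endsH T cH" and uH: "unique_mincuts VH EH endsH T cH"
    and q: "q \<ge> 1"
    and Te: "elementary_sets V E ends T c = elementary_sets VH EH endsH T cH"
    and elem: "\<And>S. S \<in> elementary_sets V E ends T c \<Longrightarrow>
        mincut V E ends T c S \<le> mincut VH EH endsH T cH S \<and>
        mincut VH EH endsH T cH S \<le> q * mincut V E ends T c S"
  shows "\<forall>S. proper_terminal_subset T S \<longrightarrow>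
        mincut V E ends T c S \<le> mincut VH EH endsH T cH S \<and>
        mincut VH EH endsH T cH S \<le> q * mincut V E ends T c S"
proof (intro allI impI conjI)
  have UG: "unet V E ends T c" by (rule unet.intro[OF net.intro[OF G] unet_axioms.intro[OF uG]])
  have UH: "unet VH EH endsH T cH" by (rule unet.intro[OF net.intro[OF H] unet_axioms.intro[OF uH]])
  fix S assume S: "proper_terminal_subset T S"
  show "mincut VH EH endsH T cH S \<le> q * mincut V E ends T c S"
    using combine[OF UG net.intro[OF H], of q, OF _ S] elem by blast
  have "mincut V E ends T c S \<le> 1 * mincut VH EH endsH T cH S"
    using combine[OF UH net.intro[OF G], of 1, OF _ S] elem Te by auto
  then show "mincut V E ends T c S \<le> mincut VH EH endsH T cH S" by simp
qed

end
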